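(* Let $p_1<\dots<p_m$ be real numbers with $m\ge3$, let $\mu=\min_{i\ne j}|p_i-p_j|$, and define $\mu_0^2=\big[\sum_{1\le i<j\le m}(p_i-p_j)^{-2}\big]^{-1}$ and $\mu_{k+1}^2=\big(\sum_{1\le i<j\le m}\frac{1}{(p_i-p_j)^2-\mu_{k}^2}\big)^{-1}+\mu_{k}^2$ for $k\ge0$. Then for every $k\ge0$, $$0<\Big[\frac{m-1}{\mu^2/\mu_k^2-1}+\frac34 m\Big]^{-1}<\frac{\mu_{k+1}^2}{\mu_k^2}-1<\frac{\mu^2}{\mu_k^2}-1.$$ *)

theory Defs
  imports Complex_Main
begin

text \<open>Points are indexed 0..m-1 (the paper uses 1..m).\<close>

definition min_gap :: "(nat \<Rightarrow> real) \<Rightarrow> nat \<Rightarrow> real" where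
  "min_gap p m = Min {\<bar>p i - p j\<bar> | i j. i < m \<and> j < m \<and> i \<noteq> j}"

fun mu_sq :: "(nat \<Rightarrow> real) \<Rightarrow> nat \<Rightarrow> nat \<Rightarrow> real" where
  "mu_sq p m 0 = inverse (\<Sum>j<m. \<Sum>i<j. 1 / (p i - p j)^2)"
| "mu_sq p m (Suc k) =
     inverse (\<Sum>j<m. \<Sum>i<j. 1 / ((p i - p j)^2 - mu_sq p m k)) + mu_sq p m k"

end

theory Submission
  imports Defs
begin

definition SS :: "(nat \<Rightarrow> real) \<Rightarrow> nat \<Rightarrow> real \<Rightarrow> real" where
  "SS p m x = (\<Sum>j<m. \<Sum>i<j. 1 / ((p i - p j)^2 - x))"

lemma pfrac: assumes "(y::real) \<ge> 0"
  shows "1/((y+1)*(y+3)) = 1/(2*(y+1)) - 1/(2*(y+3))"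
proof -
  have "y+1 > 0" "y+3 > 0" using assms by auto
  then show ?thesis by (simp add: divide_simps) (simp add: algebra_simps)
qed

lemma telaux: assumes "(y::real) \<ge> 0"
  shows "3/4 - 1/(2*(y+1)) - 1/(2*(y+2)) + 1/((y+1)*(y+3)) = 3/4 - 1/(2*(y+2)) - 1/(2*(y+3))"
proof -
  show ?thesis using pfrac[OF assms] by linarith
qed

lemma tel: "(\<Sum>s<n. 1 / (real (s+1) * real (s+3))) = 3/4 - 1/(2*(real n+1)) - 1/(2*(real n+2))"
proof (induction n)
  case 0 then show ?case by simp
next
  case (Suc n)
  have "(\<Sum>s<Suc n. 1 / (real (s+1) * real (s+3))) = 3/4 - 1/(2*(real n+1)) - 1/(2*(real n+2)) + 1 / (real (n+1) * real (n+3))"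
    using Suc.IH by simp
  also have "\<dots> = 3/4 - 1/(2*(real (Suc n)+1)) - 1/(2*(real (Suc n)+2))"
    using telaux[of "real n"] by (simp add: add.commute)
  finally show ?case .
qed

context
  fixes p :: "nat \<Rightarrow> real" and m :: nat
  assumes m3: "m \<ge> 3" and mono: "\<And>i j. i < j \<Longrightarrow> j < m \<Longrightarrow> p i < p j"
begin

lemma G_eq: "{\<bar>p i - p j\<bar> | i j. i < m \<and> j < m \<and> i \<noteq> j}
   = (\<lambda>(i,j). \<bar>p i - p j\<bar>) ` {(i,j). i < m \<and> j < m \<and> i \<noteq> j}"
  by auto

lemma G_fin: "finite {\<bar>p i - p j\<bar> | i j. i < m \<and> j < m \<and> i \<noteq> j}"
proof -
  have "{(i,j). i < m \<and> j < m \<and> i \<noteq> j} \<subseteq> {..<m} \<times> {..<m}" by auto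
  then have "finite {(i,j). i < m \<and> j < m \<and> i \<noteq> j}" by (rule finite_subset) auto
  then show ?thesis unfolding G_eq by simp
qed

lemma G_ne: "{\<bar>p i - p j\<bar> | i j. i < m \<and> j < m \<and> i \<noteq> j} \<noteq> {}"
proof -
  have "\<bar>p 0 - p 1\<bar> \<in> {\<bar>p i - p j\<bar> | i j. i < m \<and> j < m \<and> i \<noteq> j}"
    using m3 by (intro CollectI exI[of _ 0] exI[of _ 1]) auto
  then show ?thesis by blast
qed

lemma gap_le: "i < j \<Longrightarrow> j < m \<Longrightarrow> min_gap p m \<le> p j - p i"
proof -
  assume a: "i < j" "j < m"
  have "\<bar>p j - p i\<bar> \<in> {\<bar>p i - p j\<bar> | i j. i < m \<and> j < m \<and> i \<noteq> j}"
    using a by (intro CollectI exI[of _ j] exI[of _ i]) auto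
  then have "min_gap p m \<le> \<bar>p j - p i\<bar>" unfolding min_gap_def using G_fin by (rule Min_le[rotated])
  moreover have "p i < p j" using mono a by auto
  ultimately show ?thesis by simp
qed

lemma gap_att: "\<exists>i j. i < j \<and> j < m \<and> min_gap p m = p j - p i"
proof -
  have "min_gap p m \<in> {\<bar>p i - p j\<bar> | i j. i < m \<and> j < m \<and> i \<noteq> j}"
    unfolding min_gap_def using G_fin G_ne by (rule Min_in)
  then obtain i j where ij: "i < m" "j < m" "i \<noteq> j" "min_gap p m = \<bar>p i - p j\<bar>" by auto
  show ?thesis
  proof (cases "i < j")
    case True
    then have "p i < p j" using mono ij by auto
    then show ?thesis using True ij by (intro exI[of _ i] exI[of _ j]) auto
  next
    case False
    then have "j < i" using ij by auto
    then have "p j < p i" using mono ij by auto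
    then show ?thesis using \<open>j < i\<close> ij by (intro exI[of _ j] exI[of _ i]) auto
  qed
qed

lemma gap_pos: "min_gap p m > 0"
proof -
  obtain i j where "i < j" "j < m" "min_gap p m = p j - p i" using gap_att by blast
  then show ?thesis using mono by auto
qed

lemma spread: "i + d < m \<Longrightarrow> real d * min_gap p m \<le> p (i+d) - p i"
proof (induction d)
  case 0 then show ?case by simp
next
  case (Suc d)
  have "min_gap p m \<le> p (i + Suc d) - p (i + d)" using Suc.prems by (intro gap_le) auto
  then show ?case using Suc by (simp add: algebra_simps)
qed

lemma spread2: "i < j \<Longrightarrow> j < m \<Longrightarrow> (real (j - Suc i + 1) * min_gap p m)^2 \<le> (p i - p j)^2"
proof -
  assume a: "i < j" "j < m"
  have "real (j - i) * min_gap p m \<le> p (i + (j-i)) - p i" using a by (intro spread) auto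
  then have h: "real (j - Suc i + 1) * min_gap p m \<le> p j - p i" using a by (simp add: Suc_diff_Suc)
  have "0 \<le> real (j - Suc i + 1) * min_gap p m" using gap_pos by simp
  then have "(real (j - Suc i + 1) * min_gap p m)^2 \<le> (p j - p i)^2" using h by (intro power_mono) auto
  then show ?thesis by (simp add: power2_commute)
qed

lemma termpos: "x < (min_gap p m)^2 \<Longrightarrow> i < j \<Longrightarrow> j < m \<Longrightarrow> (min_gap p m)^2 - x \<le> (p i - p j)^2 - x"
proof -
  assume a: "x < (min_gap p m)^2" "i < j" "j < m"
  have "min_gap p m \<le> p j - p i" using a by (intro gap_le)
  then have "(min_gap p m)^2 \<le> (p j - p i)^2" using gap_pos by (intro power_mono) auto
  then show ?thesis by (simp add: power2_commute)
qed

lemma lemA: "0 \<le> x \<Longrightarrow> x < (min_gap p m)^2 \<Longrightarrow> SS p m x > 1 / ((min_gap p m)^2 - x)"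
proof -
  assume x: "0 \<le> x" "x < (min_gap p m)^2"
  define M where "M = (min_gap p m)^2"
  define F where "F j = (\<Sum>i<j. 1 / ((p i - p j)^2 - x))" for j
  have fpos: "1 / ((p i - p j)^2 - x) > 0" if "i < j" "j < m" for i j
    using termpos[OF x(2) that] x by simp
  have Fnn: "F j \<ge> 0" if "j < m" for j
    unfolding F_def using fpos that by (intro sum_nonneg) (auto intro: less_imp_le)
  obtain i0 j0 where ij: "i0 < j0" "j0 < m" "min_gap p m = p j0 - p i0" using gap_att by blast
  have "F j0 \<ge> 1 / ((p i0 - p j0)^2 - x)"
    unfolding F_def using ij fpos by (intro member_le_sum) (auto intro: less_imp_le)
  moreover have "(p i0 - p j0)^2 = M" unfolding M_def ij(3) by (simp add: power2_commute)
  ultimately have F0: "F j0 \<ge> 1/(M - x)" by simp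
  obtain j' where j': "j' < m" "j' \<noteq> j0" "j' \<ge> 1"
  proof (cases "j0 = 1")
    case True then show ?thesis using m3 that[of 2] by auto
  next
    case False then show ?thesis using m3 that[of 1] by auto
  qed
  have ne: "{..<j'} \<noteq> {}" using j' by (simp add: lessThan_empty_iff)
  have Fj': "F j' > 0" unfolding F_def using j' fpos ne by (intro sum_pos) auto
  have "SS p m x = F j0 + sum F ({..<m} - {j0})"
    unfolding SS_def F_def using ij by (subst sum.remove[of _ j0]) auto
  moreover have "sum F ({..<m} - {j0}) \<ge> F j'"
    using j' Fnn by (intro member_le_sum) auto
  ultimately show ?thesis using F0 Fj' unfolding M_def by linarith
qed

lemma lemB: "0 < x \<Longrightarrow> x < (min_gap p m)^2 \<Longrightarrow>
   x * SS p m x < (real m - 1) * x / ((min_gap p m)^2 - x) + 3/4 * real m"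
proof -
  assume x: "0 < x" "x < (min_gap p m)^2"
  define \<mu> where "\<mu> = min_gap p m"
  have mu: "\<mu> > 0" unfolding \<mu>_def by (rule gap_pos)
  define e where "e s = x / ((real s + 1)^2 * \<mu>^2 - x)" for s :: nat
  define a where "a = x / (\<mu>^2 - x)"
  have den: "(real s + 1)^2 * \<mu>^2 - x \<ge> \<mu>^2 - x" for s :: nat
  proof -
    have "1 \<le> (real s + 1)^2" by simp
    then have "1 * \<mu>^2 \<le> (real s + 1)^2 * \<mu>^2" by (intro mult_right_mono) auto
    then show ?thesis by simp
  qed
  have xm: "\<mu>^2 - x > 0" using x unfolding \<mu>_def by simp
  have inner: "(\<Sum>i<j. x / ((p i - p j)^2 - x)) \<le> (\<Sum>s<j. e s)" if j: "j < m" for j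
  proof -
    have "(\<Sum>i<j. x / ((p i - p j)^2 - x)) \<le> (\<Sum>i<j. e (j - Suc i))"
    proof (rule sum_mono)
      fix i assume "i \<in> {..<j}"
      then have i: "i < j" by simp
      have s2: "(real (j - Suc i + 1) * \<mu>)^2 \<le> (p i - p j)^2" unfolding \<mu>_def using spread2 i j by blast
      have d1: "(real (j - Suc i) + 1)^2 * \<mu>^2 - x > 0" using den[of "j - Suc i"] xm by linarith
      have "(real (j - Suc i) + 1)^2 * \<mu>^2 - x \<le> (p i - p j)^2 - x"
        using s2 by (simp add: power_mult_distrib add.commute)
      then show "x / ((p i - p j)^2 - x) \<le> e (j - Suc i)"
        unfolding e_def using d1 x by (intro divide_left_mono) auto
    qed
    also have "\<dots> = (\<Sum>s<j. e s)" by (rule sum.nat_diff_reindex)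
    finally show ?thesis .
  qed
  have ebound: "e (Suc s) \<le> 1 / (real (s+1) * real (s+3))" for s
  proof -
    have eq: "(real (Suc s) + 1)^2 = real (s+1) * real (s+3) + 1" by (simp add: power2_eq_square algebra_simps)
    define A where "A = real (s+1) * real (s+3)"
    have A: "A \<ge> 3" unfolding A_def
    proof -
      have "1 * 3 \<le> real (s+1) * real (s+3)" by (intro mult_mono) auto
      then show "3 \<le> real (s+1) * real (s+3)" by simp
    qed
    have "1 * \<mu>^2 \<le> (A + 1) * \<mu>^2" using A by (intro mult_right_mono) auto
    then have d: "(A + 1) * \<mu>^2 - x > 0" using x unfolding \<mu>_def by simp
    have "x * A \<le> (A + 1) * \<mu>^2 - x"
    proof -
      have "x * (A+1) \<le> \<mu>^2 * (A+1)" using x A unfolding \<mu>_def by (intro mult_right_mono) auto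
      then show ?thesis by (simp add: algebra_simps)
    qed
    then have "x / ((A + 1) * \<mu>^2 - x) \<le> 1 / A" using d A
      by (simp add: field_simps)
    then show ?thesis unfolding e_def eq A_def by simp
  qed
  have inner2: "(\<Sum>s<j. e s) < (if j = 0 then 0 else a) + 3/4" for j
  proof (cases j)
    case 0 then show ?thesis by simp
  next
    case (Suc n)
    have "(\<Sum>s<j. e s) = e 0 + (\<Sum>s<n. e (Suc s))" unfolding Suc by (rule sum.lessThan_Suc_shift)
    also have "(\<Sum>s<n. e (Suc s)) \<le> (\<Sum>s<n. 1 / (real (s+1) * real (s+3)))" by (intro sum_mono ebound)
    also have "\<dots> < 3/4"
    proof -
      have "1/(2*(real n+1)) > 0" "1/(2*(real n+2)) > 0" by auto
      then show ?thesis unfolding tel by linarith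
    qed
    finally show ?thesis unfolding Suc e_def a_def by simp
  qed
  have "x * SS p m x = (\<Sum>j<m. \<Sum>i<j. x / ((p i - p j)^2 - x))"
    unfolding SS_def by (simp add: sum_distrib_left)
  also have "\<dots> < (\<Sum>j<m. (if j = 0 then 0 else a) + 3/4)"
  proof (rule sum_strict_mono)
    show "finite {..<m}" by simp
    show "{..<m} \<noteq> {}" using m3 by (simp add: lessThan_empty_iff)
    fix j assume "j \<in> {..<m}"
    then show "(\<Sum>i<j. x / ((p i - p j)^2 - x)) < (if j = 0 then 0 else a) + 3/4"
      using inner[of j] inner2[of j] by simp
  qed
  also have "\<dots> = (real m - 1) * a + 3/4 * real m"
  proof -
    obtain m' where m': "m = Suc m'" using m3 by (cases m) auto
    have "(\<Sum>j<m. (if j = 0 then 0 else a)) = (\<Sum>j<m'. a)"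
      unfolding m' by (subst sum.lessThan_Suc_shift) simp
    also have "\<dots> = (real m - 1) * a" using m' by simp
    finally have h1: "(\<Sum>j<m. (if j = 0 then 0 else a)) = (real m - 1) * a" .
    have h2: "(\<Sum>j<m. (3/4::real)) = 3/4 * real m" by simp
    show ?thesis unfolding sum.distrib h1 h2 ..
  qed
  finally show ?thesis unfolding a_def \<mu>_def by simp
qed

lemma invb: "(0::real) \<le> x \<Longrightarrow> x < M \<Longrightarrow> S > 1 / (M - x) \<Longrightarrow> 0 < inverse S \<and> inverse S < M - x"
proof -
  assume a: "0 \<le> x" "x < M" "S > 1 / (M - x)"
  have p: "1 / (M - x) > 0" using a by simp
  then have Sp: "S > 0" using a by linarith
  have "inverse S < inverse (1 / (M - x))" using a(3) p by (rule less_imp_inverse_less)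
  then show ?thesis using Sp by simp
qed

lemma bounds: "0 < mu_sq p m k \<and> mu_sq p m k < (min_gap p m)^2"
proof (induction k)
  case 0
  have "SS p m 0 > 1 / ((min_gap p m)^2 - 0)" using lemA[of 0] gap_pos by simp
  then have "0 < inverse (SS p m 0) \<and> inverse (SS p m 0) < (min_gap p m)^2 - 0"
    using gap_pos by (intro invb) auto
  then show ?case by (simp add: SS_def)
next
  case (Suc k)
  define x where "x = mu_sq p m k"
  have x: "0 < x" "x < (min_gap p m)^2" using Suc unfolding x_def by auto
  have A: "SS p m x > 1 / ((min_gap p m)^2 - x)" using lemA x by auto
  have I: "0 < inverse (SS p m x) \<and> inverse (SS p m x) < (min_gap p m)^2 - x"
    using x A by (intro invb) auto
  have eq: "mu_sq p m (Suc k) = inverse (SS p m x) + x" by (simp add: SS_def x_def)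
  show ?case unfolding eq using x I by linarith
qed

end

theorem mainTheorem8:
  fixes p :: "nat \<Rightarrow> real" and m :: nat and k :: nat
  assumes "m \<ge> 3"
    and "\<And>i j. i < j \<Longrightarrow> j < m \<Longrightarrow> p i < p j"
  shows "0 < inverse ((real m - 1) / ((min_gap p m)^2 / mu_sq p m k - 1) + 3/4 * real m)
       \<and> inverse ((real m - 1) / ((min_gap p m)^2 / mu_sq p m k - 1) + 3/4 * real m)
           < mu_sq p m (Suc k) / mu_sq p m k - 1
       \<and> mu_sq p m (Suc k) / mu_sq p m k - 1 < (min_gap p m)^2 / mu_sq p m k - 1"
proof -
  define x where "x = mu_sq p m k"
  define M where "M = (min_gap p m)^2"
  define S where "S = SS p m x"
  have x: "0 < x" "x < M" using bounds[OF assms] unfolding x_def M_def by auto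
  have x1: "mu_sq p m (Suc k) < M" using bounds[OF assms, where k="Suc k"] unfolding M_def by auto
  have A: "S > 1 / (M - x)" using lemA[OF assms, where x=x] x unfolding S_def M_def by auto
  have p1: "1 / (M - x) > 0" using x by simp
  have Spos: "S > 0" using A p1 by linarith
  have B: "x * S < (real m - 1) * x / (M - x) + 3/4 * real m"
    using lemB[OF assms, where x=x] x unfolding S_def M_def by auto
  have suc: "mu_sq p m (Suc k) = inverse S + x" unfolding x_def S_def SS_def by simp
  have r1: "(inverse S + x) / x - 1 = inverse S / x" using x by (simp add: add_divide_distrib)
  have r2: "inverse S / x = inverse (x * S)" by (simp add: divide_inverse mult.commute)
  have r: "mu_sq p m (Suc k) / x - 1 = inverse (x * S)" unfolding suc r1 r2 ..
  have t1: "M / x - 1 = (M - x) / x" using x by (simp add: diff_divide_distrib)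
  have t: "(real m - 1) / (M / x - 1) = (real m - 1) * x / (M - x)" unfolding t1 by simp
  have m1: "real m - 1 \<ge> 0" using assms by simp
  have Q: "(real m - 1) * x / (M - x) + 3/4 * real m > 0"
  proof -
    have "(real m - 1) * x / (M - x) \<ge> 0" using m1 x by simp
    moreover have "3/4 * real m > 0" using assms by simp
    ultimately show ?thesis by linarith
  qed
  have xS: "x * S > 0" using x Spos by simp
  have L: "inverse ((real m - 1) * x / (M - x) + 3/4 * real m) < inverse (x * S)"
    using B xS by (rule less_imp_inverse_less)
  have R: "mu_sq p m (Suc k) / x - 1 < M / x - 1" using x1 x by (simp add: divide_strict_right_mono)
  have P: "0 < inverse ((real m - 1) * x / (M - x) + 3/4 * real m)" using Q by simp
  show ?thesis unfolding x_def[symmetric] M_def[symmetric] t using P L R unfolding r by blast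
qed

end
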